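(* Let $n\ge 2$, let $P_n$ be the path with vertices $x_1,\dots,x_n$ and edges $\{x_i,x_{i+1}\}$, let $\mathcal C$ be a maximal independent set of $P_n$ with $c:=|\mathcal C|$, and let $G$ be the $\mathcal C$-suspension of $P_n$. Let $\alpha:=\lceil n/2\rceil$, $b_n:=(-1)^{\lceil n/2\rceil}P_{P_n}(-1)$, $\delta_0=0$ if $x_1\in\mathcal C$ and $1$ otherwise, $\delta_t=0$ if $x_n\in\mathcal C$ and $1$ otherwise, and $\delta:=\delta_0+\delta_t$. Then: (a) If $n\equiv 0,2\pmod 3$, then $\mathfrak a(G)=0$ and $h_{\alpha(G)}(G)=-b_n$ if $c+\delta=\alpha+1$, while $h_{\alpha(G)}(G)=b_n$ if $c+\delta\le\alpha$. (b) If $n=3k+1$ and $\mathcal C=\{x_1,x_4,\dots,x_{3k+1}\}$, then $\mathfrak a(G)=0$ and $h_{\alpha(G)}(G)=(-1)^{\alpha+k+1}$. (c) In all remaining cases, $\mathfrak a(G)<0$.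
   Context: For $\varnothing\ne C\subseteq V(G)$, the $C$-suspension of $G$ is obtained by adding a new vertex $z$ adjacent exactly to the vertices of $C$. The independence polynomial is $P_G(x)=\sum_i g_ix^i$, $g_i$ the number of independent sets of size $i$. For $G$ on vertex set $[N]$, let $S=K[y_1,\dots,y_N]$ ($K$ a field), $I(G)$ the edge ideal generated by $y_iy_j$ for edges $\{i,j\}$, $\alpha(G)$ the independence number (equal to $\dim S/I(G)$), and write the Hilbert series of $S/I(G)$ uniquely as $h_G(t)/(1-t)^{\alpha(G)}$ with $h_G(t)=\sum_i h_i(G)t^i$ a polynomial with nonzero leading coefficient ($h_i(G)=0$ for $i>\deg h_G$). The $\mathfrak a$-invariant is $\mathfrak a(G)=\deg h_G(t)-\alpha(G)$, and $h_{\alpha(G)}(G)$ is the coefficient of $t^{\alpha(G)}$ in $h_G(t)$. *)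

theory Defs
  imports "HOL-Library.Multiset" "HOL-Computational_Algebra.Polynomial_FPS"
begin

text \<open>Simple graphs: a finite vertex set V :: nat set and an edge set E of
  2-element subsets of V.\<close>

definition indep :: "nat set \<Rightarrow> nat set set \<Rightarrow> nat set \<Rightarrow> bool" where
  "indep V E S \<longleftrightarrow> S \<subseteq> V \<and> (\<forall>e\<in>E. \<not> e \<subseteq> S)"

definition maximal_indep :: "nat set \<Rightarrow> nat set set \<Rightarrow> nat set \<Rightarrow> bool" where
  "maximal_indep V E S \<longleftrightarrow> indep V E S \<and> (\<forall>v\<in>V - S. \<not> indep V E (insert v S))"

definition indep_num :: "nat set \<Rightarrow> nat set set \<Rightarrow> nat" where
  "indep_num V E = Max (card ` {S. indep V E S})"

definition indep_poly_eval :: "nat set \<Rightarrow> nat set set \<Rightarrow> int \<Rightarrow> int" where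
  "indep_poly_eval V E x = (\<Sum>S\<in>{S. indep V E S}. x ^ card S)"

definition pathV :: "nat \<Rightarrow> nat set" where
  "pathV n = {1..n}"

definition pathE :: "nat \<Rightarrow> nat set set" where
  "pathE n = {{i, Suc i} | i. 1 \<le> i \<and> i < n}"

definition suspV :: "nat set \<Rightarrow> nat \<Rightarrow> nat set" where
  "suspV V z = insert z V"

definition suspE :: "nat set set \<Rightarrow> nat set \<Rightarrow> nat \<Rightarrow> nat set set" where
  "suspE E C z = E \<union> {{z, c} | c. c \<in> C}"

text \<open>Hilbert function of S/I(G): the monomials y^m (m a multiset of vertices)
  of degree d that do not lie in the monomial ideal I(G), i.e. are divisible by
  no generator y_i y_j with {i,j} an edge. These standard monomials form a
  K-basis of the degree-d component of S/I(G), for any field K.\<close>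
definition standard_monomials :: "nat set \<Rightarrow> nat set set \<Rightarrow> nat \<Rightarrow> nat multiset set" where
  "standard_monomials V E d =
     {m. set_mset m \<subseteq> V \<and> size m = d \<and>
         \<not> (\<exists>e\<in>E. \<exists>i j. e = {i, j} \<and> i \<noteq> j \<and> i \<in># m \<and> j \<in># m)}"

definition hilbert_fun :: "nat set \<Rightarrow> nat set set \<Rightarrow> nat \<Rightarrow> nat" where
  "hilbert_fun V E d = card (standard_monomials V E d)"

definition hilbert_series :: "nat set \<Rightarrow> nat set set \<Rightarrow> int fps" where
  "hilbert_series V E = Abs_fps (\<lambda>d. int (hilbert_fun V E d))"

definition h_poly :: "nat set \<Rightarrow> nat set set \<Rightarrow> int poly" where
  "h_poly V E = (THE p. fps_of_poly p = hilbert_series V E * (1 - fps_X) ^ indep_num V E)"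

definition a_inv :: "nat set \<Rightarrow> nat set set \<Rightarrow> int" where
  "a_inv V E = int (degree (h_poly V E)) - int (indep_num V E)"

end

theory Submission
  imports Defs
begin

definition msupp :: "nat set \<Rightarrow> nat \<Rightarrow> nat multiset set" where
  "msupp S d = {m. set_mset m = S \<and> size m = d}"

lemma finite_msupp: "finite S \<Longrightarrow> finite (msupp S d)"
  by (rule finite_subset[OF _ finite_multisets_of_size[of S d]])
     (auto simp: msupp_def multisets_of_size_def)

lemma msupp_empty: "card (msupp {} d) = (if d = 0 then 1 else 0)"
proof -
  have "msupp {} d = (if d = 0 then {{#}} else {})" by (auto simp: msupp_def)
  then show ?thesis by simp
qed

lemma msupp_insert_0: "card (msupp (insert a S) 0) = 0"
proof -
  have "msupp (insert a S) 0 = {}" by (auto simp: msupp_def)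
  then show ?thesis by simp
qed

lemma msupp_insert_Suc:
  assumes "finite S" "a \<notin> S"
  shows "card (msupp (insert a S) (Suc d)) = card (msupp (insert a S) d) + card (msupp S d)"
proof -
  have eq: "msupp (insert a S) (Suc d) = add_mset a ` (msupp (insert a S) d \<union> msupp S d)"
  proof
    show "msupp (insert a S) (Suc d) \<subseteq> add_mset a ` (msupp (insert a S) d \<union> msupp S d)"
    proof
      fix m assume m: "m \<in> msupp (insert a S) (Suc d)"
      then have am: "a \<in># m" by (auto simp: msupp_def)
      define m' where "m' = m - {#a#}"
      have mm: "m = add_mset a m'" using am by (simp add: m'_def)
      have s: "set_mset m' \<subseteq> insert a S" "S \<subseteq> set_mset m'"
        using m assms(2) by (auto simp: msupp_def mm)
      have "set_mset m' = insert a S \<or> set_mset m' = S"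
        using s by blast
      moreover have "size m' = d" using m by (simp add: msupp_def mm)
      ultimately have "m' \<in> msupp (insert a S) d \<union> msupp S d" by (auto simp: msupp_def)
      then show "m \<in> add_mset a ` (msupp (insert a S) d \<union> msupp S d)" using mm by blast
    qed
  next
    show "add_mset a ` (msupp (insert a S) d \<union> msupp S d) \<subseteq> msupp (insert a S) (Suc d)"
    proof
      fix m assume "m \<in> add_mset a ` (msupp (insert a S) d \<union> msupp S d)"
      then obtain m' where m': "m = add_mset a m'" "m' \<in> msupp (insert a S) d \<union> msupp S d" by blast
      then have "set_mset m' = insert a S \<or> set_mset m' = S" "size m' = d" unfolding msupp_def by blast+
      then show "m \<in> msupp (insert a S) (Suc d)" unfolding msupp_def m'(1) by auto
    qed
  qed
  have "card (msupp (insert a S) (Suc d)) = card (msupp (insert a S) d \<union> msupp S d)"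
    unfolding eq by (rule card_image) (simp add: inj_on_def)
  also have "\<dots> = card (msupp (insert a S) d) + card (msupp S d)"
  proof (rule card_Un_disjoint)
    show "finite (msupp (insert a S) d)" using assms(1) by (simp add: finite_msupp)
    show "finite (msupp S d)" using assms(1) by (simp add: finite_msupp)
    show "msupp (insert a S) d \<inter> msupp S d = {}"
    proof (rule ccontr)
      assume "msupp (insert a S) d \<inter> msupp S d \<noteq> {}"
      then obtain m where "set_mset m = insert a S" "set_mset m = S" by (auto simp: msupp_def)
      then show False using assms(2) by blast
    qed
  qed
  finally show ?thesis .
qed

definition Fser :: "nat set \<Rightarrow> int fps" where
  "Fser S = Abs_fps (\<lambda>d. int (card (msupp S d)))"

lemma Fser_rel:
  assumes "finite S" "a \<notin> S"
  shows "(1 - fps_X) * Fser (insert a S) = fps_X * Fser S"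
proof -
  have e: "(1 - fps_X) * Fser (insert a S) = Fser (insert a S) - fps_X * Fser (insert a S)"
    by (simp add: left_diff_distrib)
  show ?thesis unfolding e
  proof (rule fps_ext)
    fix n
    show "fps_nth (Fser (insert a S) - fps_X * Fser (insert a S)) n = fps_nth (fps_X * Fser S) n"
    proof (cases n)
      case 0 then show ?thesis by (simp add: Fser_def msupp_insert_0)
    next
      case (Suc d)
      then show ?thesis using msupp_insert_Suc[OF assms, of d]
        by (simp add: Fser_def)
    qed
  qed
qed

lemma Fser_main: "finite S \<Longrightarrow> Fser S * (1 - fps_X) ^ card S = fps_X ^ card S"
proof (induction S rule: finite_induct)
  case empty
  have "Fser {} = 1" by (rule fps_ext) (simp add: Fser_def msupp_empty)
  then show ?case by simp
next
  case (insert a S)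
  have "Fser (insert a S) * (1 - fps_X) ^ card (insert a S)
      = ((1 - fps_X) * Fser (insert a S)) * (1 - fps_X) ^ card S"
    using insert by (simp add: algebra_simps)
  also have "\<dots> = (fps_X * Fser S) * (1 - fps_X) ^ card S"
    by (simp only: Fser_rel[OF insert(1,2)])
  also have "\<dots> = fps_X * (Fser S * (1 - fps_X) ^ card S)"
    by (simp only: mult.assoc)
  also have "\<dots> = fps_X ^ card (insert a S)" using insert by simp
  finally show ?case .
qed

definition wfE :: "nat set set \<Rightarrow> bool" where
  "wfE E \<longleftrightarrow> (\<forall>e\<in>E. \<exists>i j. e = {i, j} \<and> i \<noteq> j)"

definition IS :: "nat set \<Rightarrow> nat set set \<Rightarrow> nat set set" where
  "IS V E = {S. indep V E S}"

lemma finite_IS: "finite V \<Longrightarrow> finite (IS V E)"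
  by (rule finite_subset[of _ "Pow V"]) (auto simp: IS_def indep_def)

lemma empty_IS: "wfE E \<Longrightarrow> {} \<in> IS V E"
  by (fastforce simp: IS_def indep_def wfE_def)

lemma card_le_indep_num: "finite V \<Longrightarrow> S \<in> IS V E \<Longrightarrow> card S \<le> indep_num V E"
  unfolding indep_num_def
  by (rule Max_ge) (auto simp: finite_IS[unfolded IS_def] IS_def)

lemma sm_eq:
  assumes "wfE E"
  shows "standard_monomials V E d = (\<Union>S\<in>IS V E. msupp S d)"
proof (intro equalityI subsetI)
  fix m assume m: "m \<in> standard_monomials V E d"
  have "indep V E (set_mset m)"
    unfolding indep_def
  proof (intro conjI ballI)
    show "set_mset m \<subseteq> V" using m by (simp add: standard_monomials_def)
    fix e assume e: "e \<in> E"
    then obtain i j where ij: "e = {i, j}" "i \<noteq> j" using assms by (auto simp: wfE_def)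
    show "\<not> e \<subseteq> set_mset m"
    proof
      assume "e \<subseteq> set_mset m"
      then have "i \<in># m" "j \<in># m" using ij by auto
      then show False using m e ij by (auto simp: standard_monomials_def)
    qed
  qed
  then show "m \<in> (\<Union>S\<in>IS V E. msupp S d)" using m
    by (auto simp: IS_def msupp_def standard_monomials_def)
next
  fix m assume "m \<in> (\<Union>S\<in>IS V E. msupp S d)"
  then have i: "indep V E (set_mset m)" and s: "size m = d"
    by (auto simp: IS_def msupp_def)
  have "\<not> (\<exists>e\<in>E. \<exists>i j. e = {i, j} \<and> i \<noteq> j \<and> i \<in># m \<and> j \<in># m)"
  proof
    assume "\<exists>e\<in>E. \<exists>i j. e = {i, j} \<and> i \<noteq> j \<and> i \<in># m \<and> j \<in># m"
    then obtain e i j where "e \<in> E" "e = {i, j}" "i \<in># m" "j \<in># m" by blast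
    then show False using i by (auto simp: indep_def)
  qed
  then show "m \<in> standard_monomials V E d" using i s
    by (auto simp: standard_monomials_def indep_def)
qed

lemma hilbert_fun_eq:
  assumes "wfE E" "finite V"
  shows "hilbert_fun V E d = (\<Sum>S\<in>IS V E. card (msupp S d))"
  unfolding hilbert_fun_def sm_eq[OF assms(1)]
proof (rule card_UN_disjoint)
  show "finite (IS V E)" using assms(2) by (rule finite_IS)
  show "\<forall>S\<in>IS V E. finite (msupp S d)"
    using assms(2) by (auto intro!: finite_msupp simp: IS_def indep_def intro: finite_subset)
  show "\<forall>S\<in>IS V E. \<forall>T\<in>IS V E. S \<noteq> T \<longrightarrow> msupp S d \<inter> msupp T d = {}"
    by (auto simp: msupp_def)
qed

lemma hilbert_series_eq:
  assumes "wfE E" "finite V"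
  shows "hilbert_series V E = (\<Sum>S\<in>IS V E. Fser S)"
  by (rule fps_ext) (simp add: hilbert_series_def fps_sum_nth Fser_def hilbert_fun_eq[OF assms])

definition Hp :: "nat set \<Rightarrow> nat set set \<Rightarrow> int poly" where
  "Hp V E = (\<Sum>S\<in>IS V E. monom 1 (card S) * [:1, -1:] ^ (indep_num V E - card S))"

lemma fps_of_poly_1mX: "fps_of_poly [:1, -1:] = (1 - fps_X :: int fps)"
  by (simp add: fps_of_poly_pCons fps_const_neg)

lemma h_poly_eq:
  assumes "wfE E" "finite V"
  shows "h_poly V E = Hp V E"
proof -
  have fin: "\<And>S. S \<in> IS V E \<Longrightarrow> finite S"
    using assms(2) by (auto simp: IS_def indep_def intro: finite_subset)
  have "hilbert_series V E * (1 - fps_X) ^ indep_num V E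
      = (\<Sum>S\<in>IS V E. Fser S * (1 - fps_X) ^ indep_num V E)"
    by (simp add: hilbert_series_eq[OF assms] sum_distrib_right)
  also have "\<dots> = (\<Sum>S\<in>IS V E. fps_X ^ card S * (1 - fps_X) ^ (indep_num V E - card S))"
  proof (rule sum.cong[OF refl])
    fix S assume S: "S \<in> IS V E"
    have eq: "(1 - fps_X :: int fps) ^ indep_num V E = (1 - fps_X) ^ card S * (1 - fps_X) ^ (indep_num V E - card S)"
      using card_le_indep_num[OF assms(2) S] by (metis power_add le_add_diff_inverse)
    have "Fser S * (1 - fps_X) ^ indep_num V E = (Fser S * (1 - fps_X) ^ card S) * (1 - fps_X) ^ (indep_num V E - card S)"
      by (simp only: eq mult.assoc)
    also have "\<dots> = fps_X ^ card S * (1 - fps_X) ^ (indep_num V E - card S)"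
      by (simp only: Fser_main[OF fin[OF S]])
    finally show "Fser S * (1 - fps_X) ^ indep_num V E = fps_X ^ card S * (1 - fps_X) ^ (indep_num V E - card S)" .
  qed
  also have "\<dots> = fps_of_poly (Hp V E)"
    by (simp add: Hp_def fps_of_poly_sum fps_of_poly_mult fps_of_poly_power fps_of_poly_monom' fps_of_poly_1mX)
  finally have *: "fps_of_poly (Hp V E) = hilbert_series V E * (1 - fps_X) ^ indep_num V E" ..
  show ?thesis unfolding h_poly_def
  proof (rule the_equality)
    show "fps_of_poly (Hp V E) = hilbert_series V E * (1 - fps_X) ^ indep_num V E" by (rule *)
  next
    fix p assume "fps_of_poly p = hilbert_series V E * (1 - fps_X) ^ indep_num V E"
    with * show "p = Hp V E" by (metis fps_of_poly_eq_iff)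
  qed
qed

lemma degree_Hp:
  assumes "finite V"
  shows "degree (Hp V E) \<le> indep_num V E"
  unfolding Hp_def
proof (rule degree_sum_le)
  show "finite (IS V E)" using assms by (rule finite_IS)
  fix S assume S: "S \<in> IS V E"
  have "degree (monom (1::int) (card S) * [:1, -1:] ^ (indep_num V E - card S))
        \<le> degree (monom (1::int) (card S)) + degree ([:1, -1:] ^ (indep_num V E - card S) :: int poly)"
    by (rule degree_mult_le)
  also have "\<dots> \<le> card S + (indep_num V E - card S)"
    by (intro add_mono degree_monom_le) (rule degree_power_le[THEN order_trans], simp)
  finally show "degree (monom (1::int) (card S) * [:1, -1:] ^ (indep_num V E - card S)) \<le> indep_num V E"
    using card_le_indep_num[OF assms S] by linarith
qed

lemma coeff_1mX_pow: "coeff ([:1, -1:] ^ j :: int poly) j = (-1) ^ j"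
proof -
  have d: "degree ([:1, -1:] ^ j :: int poly) = j"
    by (subst degree_power_eq) simp_all
  have "lead_coeff ([:1, -1:] ^ j :: int poly) = (-1) ^ j"
    by (simp add: lead_coeff_power)
  then show ?thesis using d by simp
qed

lemma coeff_Hp:
  assumes "finite V"
  shows "coeff (Hp V E) (indep_num V E) = (-1) ^ indep_num V E * indep_poly_eval V E (-1)"
proof -
  have "coeff (Hp V E) (indep_num V E) = (\<Sum>S\<in>IS V E. (-1) ^ (indep_num V E - card S))"
    unfolding Hp_def coeff_sum
  proof (rule sum.cong[OF refl])
    fix S assume S: "S \<in> IS V E"
    have le: "card S \<le> indep_num V E" by (rule card_le_indep_num[OF assms S])
    have "coeff (monom 1 (card S) * ([:1, - 1:] ^ (indep_num V E - card S) :: int poly)) (indep_num V E) =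
          coeff ([:1, - 1:] ^ (indep_num V E - card S) :: int poly) (indep_num V E - card S)"
      using le by (simp add: coeff_monom_mult)
    also have "\<dots> = (-1) ^ (indep_num V E - card S)" by (rule coeff_1mX_pow)
    finally show "coeff (monom 1 (card S) * [:1, - 1:] ^ (indep_num V E - card S)) (indep_num V E) =
          (-1::int) ^ (indep_num V E - card S)" .
  qed
  also have "\<dots> = (\<Sum>S\<in>IS V E. (-1) ^ indep_num V E * (-1) ^ card S)"
  proof (rule sum.cong[OF refl])
    fix S assume S: "S \<in> IS V E"
    have le: "card S \<le> indep_num V E" by (rule card_le_indep_num[OF assms S])
    have "(-1::int) ^ indep_num V E * (-1) ^ card S = (-1) ^ (indep_num V E - card S) * ((-1) ^ card S * (-1) ^ card S)"
      using le by (metis (no_types, lifting) le_add_diff_inverse2 mult.commute mult.left_commute power_add)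
    also have "\<dots> = (-1) ^ (indep_num V E - card S)"
      by (simp flip: power_add add: power_mult[symmetric] mult_2[symmetric])
    finally show "(-1::int) ^ (indep_num V E - card S) = (-1) ^ indep_num V E * (-1) ^ card S" by simp
  qed
  also have "\<dots> = (-1) ^ indep_num V E * indep_poly_eval V E (-1)"
    by (simp add: indep_poly_eval_def IS_def sum_distrib_left)
  finally show ?thesis .
qed

lemma general_main:
  assumes "wfE E" "finite V" "indep_num V E > 0"
  shows "coeff (h_poly V E) (indep_num V E) = (-1) ^ indep_num V E * indep_poly_eval V E (-1)"
    and "indep_poly_eval V E (-1) \<noteq> 0 \<Longrightarrow> a_inv V E = 0"
    and "indep_poly_eval V E (-1) = 0 \<Longrightarrow> a_inv V E < 0"
proof -
  have h: "h_poly V E = Hp V E" by (rule h_poly_eq[OF assms(1,2)])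
  show c: "coeff (h_poly V E) (indep_num V E) = (-1) ^ indep_num V E * indep_poly_eval V E (-1)"
    unfolding h by (rule coeff_Hp[OF assms(2)])
  have d: "degree (Hp V E) \<le> indep_num V E" by (rule degree_Hp[OF assms(2)])
  {
    assume "indep_poly_eval V E (-1) \<noteq> 0"
    then have "coeff (Hp V E) (indep_num V E) \<noteq> 0" using c h by simp
    then have "indep_num V E \<le> degree (Hp V E)" by (rule le_degree)
    then show "a_inv V E = 0" using d h by (simp add: a_inv_def)
  }
  {
    assume "indep_poly_eval V E (-1) = 0"
    then have z: "coeff (Hp V E) (indep_num V E) = 0" using c h by simp
    have "degree (Hp V E) \<noteq> indep_num V E"
    proof
      assume e: "degree (Hp V E) = indep_num V E"
      then have "lead_coeff (Hp V E) = 0" using z by simp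
      then have "Hp V E = 0" by simp
      then show False using e assms(3) by simp
    qed
    then show "a_inv V E < 0" using d h by (simp add: a_inv_def)
  }
qed

definition nc :: "nat set \<Rightarrow> bool" where
  "nc T \<longleftrightarrow> (\<forall>x\<in>T. Suc x \<notin> T)"

definition fam :: "nat set \<Rightarrow> nat set set" where
  "fam U = {T. T \<subseteq> U \<and> nc T}"

definition Q :: "nat set \<Rightarrow> int" where
  "Q U = (\<Sum>T\<in>fam U. (-1) ^ card T)"

lemma finite_fam: "finite U \<Longrightarrow> finite (fam U)"
  by (rule finite_subset[of _ "Pow U"]) (auto simp: fam_def)

lemma Q_empty: "Q {} = 1"
proof -
  have "fam {} = {{}}" by (auto simp: fam_def nc_def)
  then show ?thesis by (simp add: Q_def)
qed

lemma Q_split: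
  assumes "finite U" "v \<in> U" "v \<ge> 1"
  shows "Q U = Q (U - {v}) - Q (U - {v, v - 1, Suc v})"
proof -
  let ?A = "fam (U - {v})" and ?B = "fam (U - {v, v - 1, Suc v})"
  have eq: "fam U = ?A \<union> insert v ` ?B"
  proof (intro equalityI subsetI)
    fix T assume T: "T \<in> fam U"
    show "T \<in> ?A \<union> insert v ` ?B"
    proof (cases "v \<in> T")
      case False
      then show ?thesis using T by (auto simp: fam_def)
    next
      case True
      have "Suc v \<notin> T" using T True by (auto simp: fam_def nc_def)
      moreover have "v - 1 \<notin> T"
      proof
        assume "v - 1 \<in> T"
        then have "Suc (v - 1) \<notin> T" using T by (auto simp: fam_def nc_def)
        then show False using True assms(3) by simp
      qed
      ultimately have "T - {v} \<in> ?B" using T by (auto simp: fam_def nc_def)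
      moreover have "T = insert v (T - {v})" using True by auto
      ultimately show ?thesis by blast
    qed
  next
    fix T assume "T \<in> ?A \<union> insert v ` ?B"
    then show "T \<in> fam U"
    proof
      assume "T \<in> ?A" then show ?thesis by (auto simp: fam_def)
    next
      assume "T \<in> insert v ` ?B"
      then obtain T' where T': "T = insert v T'" "T' \<in> ?B" by blast
      have "nc (insert v T')"
        unfolding nc_def
      proof
        fix x assume x: "x \<in> insert v T'"
        show "Suc x \<notin> insert v T'"
        proof (cases "x = v")
          case True then show ?thesis using T' by (auto simp: fam_def)
        next
          case False
          then have "x \<in> T'" using x by simp
          then have "Suc x \<notin> T'" "x \<noteq> v - 1" using T' by (auto simp: fam_def nc_def)
          then show ?thesis using assms(3) by auto
        qed
      qed
      then show ?thesis using T' assms(2) by (auto simp: fam_def)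
    qed
  qed
  have fin: "finite ?A" "finite ?B" using assms(1) by (simp_all add: finite_fam)
  have disj: "?A \<inter> insert v ` ?B = {}" by (auto simp: fam_def)
  have inj: "inj_on (insert v) ?B"
    unfolding inj_on_def fam_def by blast
  have "Q U = (\<Sum>T\<in>?A. (-1) ^ card T) + (\<Sum>T\<in>insert v ` ?B. (-1) ^ card T)"
    unfolding Q_def eq by (rule sum.union_disjoint) (use fin disj in auto)
  also have "(\<Sum>T\<in>insert v ` ?B. (-1::int) ^ card T) = (\<Sum>T\<in>?B. (-1) ^ card (insert v T))"
    by (rule sum.reindex[OF inj, unfolded comp_def])
  also have "\<dots> = (\<Sum>T\<in>?B. - ((-1) ^ card T))"
  proof (rule sum.cong[OF refl])
    fix T assume "T \<in> ?B"
    then have "finite T" "v \<notin> T" using assms(1) by (auto simp: fam_def intro: finite_subset)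
    then show "(-1::int) ^ card (insert v T) = - ((-1) ^ card T)" by simp
  qed
  finally show ?thesis by (simp add: Q_def sum_negf)
qed

lemma Q_isolated:
  assumes "finite U" "v \<in> U" "v - 1 \<notin> U" "Suc v \<notin> U"
  shows "Q U = 0"
proof -
  have "v \<ge> 1" using assms(2,3) by (cases v) auto
  then have "Q U = Q (U - {v}) - Q (U - {v, v - 1, Suc v})" using assms by (intro Q_split)
  also have "U - {v, v - 1, Suc v} = U - {v}" using assms by auto
  finally show ?thesis by simp
qed

definition pp :: "nat \<Rightarrow> int" where "pp n = Q {1..n}"

lemma pp_rec: "pp (Suc (Suc n)) = pp (Suc n) - pp n"
proof -
  have "pp (Suc (Suc n)) = Q ({1..Suc (Suc n)} - {Suc (Suc n)}) - Q ({1..Suc (Suc n)} - {Suc (Suc n), Suc (Suc n) - 1, Suc (Suc (Suc n))})"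
    unfolding pp_def by (rule Q_split) auto
  also have "{1..Suc (Suc n)} - {Suc (Suc n)} = {1..Suc n}" by auto
  also have "{1..Suc (Suc n)} - {Suc (Suc n), Suc (Suc n) - 1, Suc (Suc (Suc n))} = {1..n}" by auto
  finally show ?thesis by (simp add: pp_def)
qed

lemma pp_0: "pp 0 = 1" by (simp add: pp_def Q_empty)

lemma pp_1: "pp 1 = 0"
  unfolding pp_def by (rule Q_isolated[of _ 1]) auto

lemma pp_3: "pp (3 * j) = (-1) ^ j \<and> pp (3 * j + 1) = 0"
proof (induction j)
  case 0 then show ?case using pp_0 pp_1 by (simp del: One_nat_def)
next
  case (Suc j)
  have a: "pp (3 * j + 2) = - ((-1) ^ j)"
    using pp_rec[of "3 * j"] Suc by (simp add: numeral_3_eq_3)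
  have b: "pp (3 * Suc j) = (-1) ^ Suc j"
    using pp_rec[of "3 * j + 1"] Suc a by (simp add: numeral_3_eq_3)
  have c: "pp (3 * Suc j + 1) = 0"
    using pp_rec[of "3 * j + 2"] a b by (simp add: numeral_3_eq_3)
  show ?case using b c by simp
qed

lemma pp_zero_iff: "pp n = 0 \<longleftrightarrow> n mod 3 = 1"
proof -
  define j where "j = n div 3"
  have n: "n = 3 * j + n mod 3" unfolding j_def by simp
  have "n mod 3 = 0 \<or> n mod 3 = 1 \<or> n mod 3 = 2" by auto
  then show ?thesis
  proof (elim disjE)
    assume h: "n mod 3 = 0"
    then have "pp n = (-1) ^ j" using pp_3[of j] n by simp
    then show ?thesis using h by simp
  next
    assume h: "n mod 3 = 1"
    then have "pp n = 0" using pp_3[of j] n by simp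
    then show ?thesis using h by simp
  next
    assume h: "n mod 3 = 2"
    have "pp (3 * j + 2) = - ((-1) ^ j)"
      using pp_rec[of "3 * j"] pp_3[of j] by (simp add: numeral_3_eq_3)
    then have "pp n = - ((-1) ^ j)" using n h by simp
    then show ?thesis using h by simp
  qed
qed

definition Uk :: "nat \<Rightarrow> nat set" where
  "Uk k = {v. 1 \<le> v \<and> v \<le> 3 * k \<and> v mod 3 \<noteq> 1}"

lemma Q_Uk: "Q (Uk k) = (-1) ^ k"
proof (induction k)
  case 0
  have "Uk 0 = {}" by (auto simp: Uk_def)
  then show ?case by (simp add: Q_empty)
next
  case (Suc k)
  have fin: "finite (Uk j)" for j by (rule finite_subset[of _ "{..3 * j}"]) (auto simp: Uk_def)
  have m: "3 * k + 3 \<in> Uk (Suc k)" by (auto simp: Uk_def)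
  have "Q (Uk (Suc k)) = Q (Uk (Suc k) - {3 * k + 3}) - Q (Uk (Suc k) - {3 * k + 3, 3 * k + 3 - 1, Suc (3 * k + 3)})"
    by (rule Q_split[OF fin m]) simp
  also have "Uk (Suc k) - {3 * k + 3} = insert (3 * k + 2) (Uk k)"
    by (auto simp: Uk_def) presburger+
  also have "Uk (Suc k) - {3 * k + 3, 3 * k + 3 - 1, Suc (3 * k + 3)} = Uk k"
    by (auto simp: Uk_def) presburger+
  also have "Q (insert (3 * k + 2) (Uk k)) = 0"
  proof (rule Q_isolated)
    show "finite (insert (3 * k + 2) (Uk k))" using fin by simp
    show "3 * k + 2 \<in> insert (3 * k + 2) (Uk k)" by simp
    show "3 * k + 2 - 1 \<notin> insert (3 * k + 2) (Uk k)" by (auto simp: Uk_def)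
    show "Suc (3 * k + 2) \<notin> insert (3 * k + 2) (Uk k)" by (auto simp: Uk_def)
  qed
  finally show ?case using Suc by simp
qed

lemma path_indep: "indep (pathV n) (pathE n) T \<longleftrightarrow> T \<subseteq> {1..n} \<and> nc T"
proof
  assume h: "indep (pathV n) (pathE n) T"
  then have s: "T \<subseteq> {1..n}" by (simp add: indep_def pathV_def)
  have "nc T" unfolding nc_def
  proof (intro ballI notI)
    fix x assume x: "x \<in> T" "Suc x \<in> T"
    then have "{x, Suc x} \<in> pathE n" using s by (force simp: pathE_def)
    then show False using h x by (auto simp: indep_def)
  qed
  then show "T \<subseteq> {1..n} \<and> nc T" using s by simp
next
  assume h: "T \<subseteq> {1..n} \<and> nc T"
  show "indep (pathV n) (pathE n) T"
    unfolding indep_def pathV_def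
  proof (intro conjI ballI)
    show "T \<subseteq> {1..n}" using h by simp
    fix e assume "e \<in> pathE n"
    then obtain i where "e = {i, Suc i}" by (auto simp: pathE_def)
    then show "\<not> e \<subseteq> T" using h by (auto simp: nc_def)
  qed
qed

lemma IS_path: "IS (pathV n) (pathE n) = fam {1..n}"
  by (auto simp: IS_def fam_def path_indep)

lemma maxC:
  assumes "maximal_indep (pathV n) (pathE n) C"
  shows "C \<subseteq> {1..n}" "nc C" "\<And>v. v \<in> {1..n} \<Longrightarrow> v \<notin> C \<Longrightarrow> v - 1 \<in> C \<or> Suc v \<in> C"
proof -
  have i: "indep (pathV n) (pathE n) C" using assms by (simp add: maximal_indep_def)
  then show C: "C \<subseteq> {1..n}" and nC: "nc C" by (simp_all add: path_indep)
  fix v assume v: "v \<in> {1..n}" "v \<notin> C"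
  then have "\<not> indep (pathV n) (pathE n) (insert v C)"
    using assms by (auto simp: maximal_indep_def pathV_def)
  then have "\<not> nc (insert v C)" using C v by (simp add: path_indep)
  then obtain x where x: "x \<in> insert v C" "Suc x \<in> insert v C" by (auto simp: nc_def)
  show "v - 1 \<in> C \<or> Suc v \<in> C"
  proof (cases "x = v")
    case True then show ?thesis using x by auto
  next
    case False
    then have "x \<in> C" using x by simp
    then have "Suc x \<notin> C" using nC by (simp add: nc_def)
    then have "Suc x = v" using x by simp
    then show ?thesis using \<open>x \<in> C\<close> by auto
  qed
qed

definition GVn :: "nat \<Rightarrow> nat set" where "GVn n = suspV (pathV n) 0"
definition GEn :: "nat \<Rightarrow> nat set \<Rightarrow> nat set set" where "GEn n C = suspE (pathE n) C 0"

lemma pair_ex: "a \<noteq> b \<Longrightarrow> \<exists>i j. {a, b} = {i, j} \<and> i \<noteq> j" by blast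

lemma wfE_G: "C \<subseteq> {1..n} \<Longrightarrow> wfE (GEn n C)"
  unfolding wfE_def GEn_def suspE_def pathE_def
proof
  fix e assume C: "C \<subseteq> {1..n}" and "e \<in> {{i, Suc i} |i. 1 \<le> i \<and> i < n} \<union> {{0, c} |c. c \<in> C}"
  then consider i where "e = {i, Suc i}" | c where "e = {0, c}" "c \<in> C" by blast
  then show "\<exists>i j. e = {i, j} \<and> i \<noteq> j"
  proof cases
    case 1 then show ?thesis using pair_ex[of i "Suc i"] by simp
  next
    case 2 then have "c \<in> {1..n}" using C by blast
    then have "c \<noteq> 0" by simp
    then show ?thesis using pair_ex[of 0 c] 2 by simp
  qed
qed

lemma finite_GV: "finite (GVn n)" by (simp add: GVn_def suspV_def pathV_def)

lemma IS_G:
  assumes C: "C \<subseteq> {1..n}"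
  shows "IS (GVn n) (GEn n C) = fam {1..n} \<union> insert 0 ` fam ({1..n} - C)"
proof (intro equalityI subsetI)
  fix S assume "S \<in> IS (GVn n) (GEn n C)"
  then have S: "S \<subseteq> insert 0 {1..n}" and E: "\<And>e. e \<in> GEn n C \<Longrightarrow> \<not> e \<subseteq> S"
    by (auto simp: IS_def indep_def GVn_def suspV_def pathV_def)
  have pe: "\<not> (x \<in> S \<and> Suc x \<in> S)" if "x \<ge> 1" for x
  proof
    assume h: "x \<in> S \<and> Suc x \<in> S"
    then have "{x, Suc x} \<in> GEn n C" using S that by (force simp: GEn_def suspE_def pathE_def)
    then show False using E h by blast
  qed
  show "S \<in> fam {1..n} \<union> insert 0 ` fam ({1..n} - C)"
  proof (cases "0 \<in> S")
    case False
    then have "S \<subseteq> {1..n}" using S by auto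
    moreover have "nc S" unfolding nc_def
      using pe \<open>S \<subseteq> {1..n}\<close> by fastforce
    ultimately show ?thesis by (simp add: fam_def)
  next
    case True
    define T where "T = S - {0}"
    have T1: "T \<subseteq> {1..n}" using S by (auto simp: T_def)
    have T2: "T \<inter> C = {}"
    proof (rule ccontr)
      assume "T \<inter> C \<noteq> {}"
      then obtain c where c: "c \<in> T" "c \<in> C" by blast
      then have "{0, c} \<in> GEn n C" by (auto simp: GEn_def suspE_def)
      then show False using E c True by (auto simp: T_def)
    qed
    have "nc T" unfolding nc_def
      using pe T1 by (fastforce simp: T_def)
    then have "T \<in> fam ({1..n} - C)" using T1 T2 by (auto simp: fam_def)
    moreover have "S = insert 0 T" using True by (auto simp: T_def)
    ultimately show ?thesis by blast
  qed
next
  fix S assume "S \<in> fam {1..n} \<union> insert 0 ` fam ({1..n} - C)"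
  then show "S \<in> IS (GVn n) (GEn n C)"
  proof
    assume h: "S \<in> fam {1..n}"
    show ?thesis unfolding IS_def indep_def
    proof (intro CollectI conjI ballI)
      show "S \<subseteq> GVn n" using h by (auto simp: fam_def GVn_def suspV_def pathV_def)
      fix e assume "e \<in> GEn n C"
      then consider i where "e = {i, Suc i}" | c where "e = {0, c}"
        by (auto simp: GEn_def suspE_def pathE_def)
      then show "\<not> e \<subseteq> S"
        by cases (use h in \<open>auto simp: fam_def nc_def\<close>)
    qed
  next
    assume "S \<in> insert 0 ` fam ({1..n} - C)"
    then obtain T where T: "S = insert 0 T" "T \<subseteq> {1..n} - C" "nc T" by (auto simp: fam_def)
    show ?thesis unfolding IS_def indep_def
    proof (intro CollectI conjI ballI)
      show "S \<subseteq> GVn n" using T by (auto simp: GVn_def suspV_def pathV_def)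
      fix e assume "e \<in> GEn n C"
      then consider i where "e = {i, Suc i}" "1 \<le> i" | c where "e = {0, c}" "c \<in> C"
        by (auto simp: GEn_def suspE_def pathE_def)
      then show "\<not> e \<subseteq> S"
      proof cases
        case 1 then show ?thesis using T by (auto simp: nc_def)
      next
        case 2 then show ?thesis using T C by auto
      qed
    qed
  qed
qed

lemma PG:
  assumes C: "C \<subseteq> {1..n}"
  shows "indep_poly_eval (GVn n) (GEn n C) (-1) = pp n - Q ({1..n} - C)"
proof -
  let ?A = "fam {1..n}" and ?B = "fam ({1..n} - C)"
  have fin: "finite ?A" "finite ?B" by (simp_all add: finite_fam)
  have disj: "?A \<inter> insert 0 ` ?B = {}" by (auto simp: fam_def)
  have inj: "inj_on (insert 0) ?B" unfolding inj_on_def fam_def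
  proof (intro ballI impI)
    fix x y assume "x \<in> {T. T \<subseteq> {1..n} - C \<and> nc T}" "y \<in> {T. T \<subseteq> {1..n} - C \<and> nc T}"
      "insert 0 x = insert 0 y"
    moreover then have "0 \<notin> x" "0 \<notin> y" by auto
    ultimately show "x = y" by (metis Diff_insert_absorb)
  qed
  have "indep_poly_eval (GVn n) (GEn n C) (-1) = (\<Sum>T\<in>?A \<union> insert 0 ` ?B. (-1) ^ card T)"
    unfolding indep_poly_eval_def IS_G[OF C, symmetric] by (simp add: IS_def)
  also have "\<dots> = (\<Sum>T\<in>?A. (-1) ^ card T) + (\<Sum>T\<in>insert 0 ` ?B. (-1) ^ card T)"
    by (rule sum.union_disjoint) (use fin disj in auto)
  also have "(\<Sum>T\<in>insert 0 ` ?B. (-1::int) ^ card T) = (\<Sum>T\<in>?B. (-1) ^ card (insert 0 T))"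
    by (rule sum.reindex[OF inj, unfolded comp_def])
  also have "\<dots> = (\<Sum>T\<in>?B. - ((-1) ^ card T))"
  proof (rule sum.cong[OF refl])
    fix T assume "T \<in> ?B"
    then have "finite T" "0 \<notin> T" by (auto simp: fam_def intro: finite_subset)
    then show "(-1::int) ^ card (insert 0 T) = - ((-1) ^ card T)" by simp
  qed
  finally show ?thesis by (simp add: Q_def pp_def sum_negf)
qed

lemma U1:
  assumes "T \<in> fam {1..n}"
  shows "card T \<le> (n + 1) div 2"
proof -
  have T: "T \<subseteq> {1..n}" "nc T" using assms by (auto simp: fam_def)
  have "inj_on (\<lambda>t. (t + 1) div 2) T"
  proof (rule inj_onI)
    fix x y assume xy: "x \<in> T" "y \<in> T" "(x + 1) div 2 = (y + 1) div 2"
    show "x = y"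
    proof (rule ccontr)
      assume "x \<noteq> y"
      then have "y = Suc x \<or> x = Suc y" using xy(3) by presburger
      then show False using xy T(2) by (auto simp: nc_def)
    qed
  qed
  moreover have "(\<lambda>t. (t + 1) div 2) ` T \<subseteq> {1..(n + 1) div 2}"
  proof
    fix z assume "z \<in> (\<lambda>t. (t + 1) div 2) ` T"
    then obtain t where t: "t \<in> T" "z = (t + 1) div 2" by blast
    then have "1 \<le> t" "t \<le> n" using T(1) by auto
    then have "1 \<le> (t + 1) div 2" "(t + 1) div 2 \<le> (n + 1) div 2" by (simp_all add: div_le_mono)
    then show "z \<in> {1..(n + 1) div 2}" using t by simp
  qed
  ultimately have "card T \<le> card {1..(n + 1) div 2}" by (intro card_inj_on_le) auto
  then show ?thesis by simp
qed

lemma O1: "\<exists>T\<in>fam {1..n}. card T = (n + 1) div 2"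
proof
  let ?T = "(\<lambda>i. 2 * i + 1) ` {..<(n + 1) div 2}"
  show "card ?T = (n + 1) div 2" by (subst card_image) (auto simp: inj_on_def)
  have "nc ?T" unfolding nc_def by auto presburger
  moreover have "?T \<subseteq> {1..n}" by auto
  ultimately show "?T \<in> fam {1..n}" by (simp add: fam_def)
qed

lemma U2:
  assumes C: "C \<subseteq> {1..n}" "nc C" "\<And>v. v \<in> {1..n} \<Longrightarrow> v \<notin> C \<Longrightarrow> v - 1 \<in> C \<or> Suc v \<in> C"
    and T: "T \<in> fam ({1..n} - C)"
  shows "card T \<le> card (C - {1}) + (if n \<in> C then 0 else 1)"
proof -
  have T1: "T \<subseteq> {1..n} - C" and T2: "nc T" using T by (auto simp: fam_def)
  define \<phi> where "\<phi> t = (LEAST y. y \<in> insert (Suc n) C \<and> t < y)" for t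
  have phi1: "\<phi> t \<in> insert (Suc n) C \<and> t < \<phi> t" if "t \<le> n" for t
    unfolding \<phi>_def by (rule LeastI[of _ "Suc n"]) (use that in auto)
  have phi2: "\<phi> t \<le> y" if "y \<in> insert (Suc n) C" "t < y" for t y
    unfolding \<phi>_def by (rule Least_le) (use that in auto)
  define W where "W = (C - {1}) \<union> (if n \<in> C then {} else {Suc n})"
  have "inj_on \<phi> T"
  proof -
    have neq: "\<phi> x \<noteq> \<phi> y" if xy: "x \<in> T" "y \<in> T" "x < y" for x y
    proof
      assume eq: "\<phi> x = \<phi> y"
      have noC: "z \<notin> C" if "x < z" "z \<le> y" for z
      proof
        assume "z \<in> C"
        then have "\<phi> x \<le> z" using phi2 that by auto
        moreover have "y < \<phi> y" using phi1[of y] xy T1 by auto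
        ultimately show False using eq that by simp
      qed
      have "Suc x \<noteq> y" using xy T2 by (auto simp: nc_def)
      then have "Suc (Suc x) \<le> y" using xy by simp
      have "Suc x \<in> {1..n}" using xy T1 by auto
      moreover have "Suc x \<notin> C" using noC \<open>Suc (Suc x) \<le> y\<close> by simp
      ultimately have "Suc x - 1 \<in> C \<or> Suc (Suc x) \<in> C" using C(3) by blast
      moreover have "x \<notin> C" using xy T1 by auto
      moreover have "Suc (Suc x) \<notin> C" using noC \<open>Suc (Suc x) \<le> y\<close> by simp
      ultimately show False by simp
    qed
    show ?thesis
    proof (rule inj_onI)
      fix x y assume "x \<in> T" "y \<in> T" "\<phi> x = \<phi> y"
      then show "x = y" using neq[of x y] neq[of y x] by (metis linorder_neqE_nat)
    qed
  qed
  moreover have "\<phi> ` T \<subseteq> W"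
  proof
    fix z assume "z \<in> \<phi> ` T"
    then obtain t where t: "t \<in> T" "z = \<phi> t" by blast
    have t1: "1 \<le> t" "t \<le> n" "t \<notin> C" using t T1 by auto
    have p: "\<phi> t \<in> insert (Suc n) C" "t < \<phi> t" using phi1[OF t1(2)] by auto
    show "z \<in> W"
    proof (cases "\<phi> t = Suc n")
      case True
      have "n \<notin> C"
      proof
        assume "n \<in> C"
        then have "t < n" using t1 by (cases "t = n") auto
        then have "\<phi> t \<le> n" using phi2 \<open>n \<in> C\<close> by auto
        then show False using True by simp
      qed
      then show ?thesis using True t by (simp add: W_def)
    next
      case False
      then show ?thesis using p t t1 by (auto simp: W_def)
    qed
  qed
  moreover have "finite W" using C(1) by (auto simp: W_def intro: finite_subset)
  ultimately have "card T \<le> card W" by (intro card_inj_on_le)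
  also have "card W = card (C - {1}) + (if n \<in> C then 0 else 1)"
    unfolding W_def using C(1) by (subst card_Un_disjoint) (auto intro: finite_subset)
  finally show ?thesis .
qed

lemma O2:
  assumes C: "C \<subseteq> {1..n}" "nc C" and n1: "1 \<le> n"
  shows "\<exists>T\<in>fam ({1..n} - C). card T = card (C - {1}) + (if n \<in> C then 0 else 1)"
proof
  define T0 where "T0 = (\<lambda>c. c - 1) ` (C - {1}) \<union> (if n \<in> C then {} else {n})"
  have ge2: "c \<in> C - {1} \<Longrightarrow> 2 \<le> c" for c using C(1) by force
  have sub: "T0 \<subseteq> {1..n} - C"
  proof
    fix x assume "x \<in> T0"
    then consider c where "c \<in> C - {1}" "x = c - 1" | "n \<notin> C" "x = n"
      by (auto simp: T0_def split: if_splits)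
    then show "x \<in> {1..n} - C"
    proof cases
      case 1
      have "c \<le> n" using 1 C(1) by auto
      moreover have "Suc (c - 1) \<in> C" using 1 ge2[OF 1(1)] by simp
      then have "c - 1 \<notin> C" using C(2) by (auto simp: nc_def)
      ultimately show ?thesis using 1 ge2[OF 1(1)] by auto
    next
      case 2 then show ?thesis using n1 by auto
    qed
  qed
  have "nc T0" unfolding nc_def
  proof (intro ballI notI)
    fix x assume x: "x \<in> T0" "Suc x \<in> T0"
    from x(1) consider c where "c \<in> C - {1}" "x = c - 1" | "n \<notin> C" "x = n"
      by (auto simp: T0_def split: if_splits)
    then show False
    proof cases
      case 1
      then have sx: "Suc x = c" using ge2[OF 1(1)] by simp
      from x(2) consider c' where "c' \<in> C - {1}" "Suc x = c' - 1" | "n \<notin> C" "Suc x = n"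
        by (auto simp: T0_def split: if_splits)
      then show False
      proof cases
        case 1
        then have "c' = Suc c" using sx ge2[OF 1(1)] by simp
        then show False using 1 \<open>c \<in> C - {1}\<close> C(2) by (auto simp: nc_def)
      next
        case 2 then show False using sx \<open>c \<in> C - {1}\<close> by simp
      qed
    next
      case 2
      then have "Suc n \<in> {1..n} - C" using x sub by auto
      then show False by simp
    qed
  qed
  then show "T0 \<in> fam ({1..n} - C)" using sub by (simp add: fam_def)
  have inj: "inj_on (\<lambda>c. c - 1) (C - {1})"
    by (rule inj_onI) (use ge2 in force)
  have disj: "(\<lambda>c. c - 1) ` (C - {1}) \<inter> (if n \<in> C then {} else {n}) = {}"
  proof (rule ccontr)
    assume "(\<lambda>c. c - 1) ` (C - {1}) \<inter> (if n \<in> C then {} else {n}) \<noteq> {}"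
    then obtain c where c: "c \<in> C - {1}" "c - 1 = n" by (auto split: if_splits)
    have "c \<le> n" using c C(1) by auto
    then show False using c ge2[OF c(1)] by simp
  qed
  have fC: "finite C" using C(1) by (rule finite_subset) simp
  show "card T0 = card (C - {1}) + (if n \<in> C then 0 else 1)"
    unfolding T0_def
    by (subst card_Un_disjoint) (use fC disj card_image[OF inj] in auto)
qed

lemma alphaG:
  assumes hC: "maximal_indep (pathV n) (pathE n) C" and n1: "1 \<le> n"
  shows "indep_num (GVn n) (GEn n C) =
           max ((n + 1) div 2) (card (C - {1}) + (if n \<in> C then 0 else 1) + 1)"
proof -
  note mc = maxC[OF hC]
  let ?A = "(n + 1) div 2" and ?B = "card (C - {1}) + (if n \<in> C then 0 else 1) + 1"
  have IS: "IS (GVn n) (GEn n C) = fam {1..n} \<union> insert 0 ` fam ({1..n} - C)" by (rule IS_G[OF mc(1)])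
  have "Max (card ` IS (GVn n) (GEn n C)) = max ?A ?B"
  proof (rule Max_eqI)
    show "finite (card ` IS (GVn n) (GEn n C))" using finite_IS[OF finite_GV] by simp
    fix y assume "y \<in> card ` IS (GVn n) (GEn n C)"
    then obtain S where S: "S \<in> fam {1..n} \<union> insert 0 ` fam ({1..n} - C)" "y = card S"
      using IS by auto
    from S(1) show "y \<le> max ?A ?B"
    proof
      assume "S \<in> fam {1..n}" then show ?thesis using U1 S(2) by fastforce
    next
      assume "S \<in> insert 0 ` fam ({1..n} - C)"
      then obtain T where T: "S = insert 0 T" "T \<in> fam ({1..n} - C)" by blast
      then have "finite T" "0 \<notin> T" by (auto simp: fam_def intro: finite_subset)
      then have "card S = card T + 1" using T by simp
      then show ?thesis using U2[OF mc T(2)] S(2) by simp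
    qed
  next
    obtain T1 where T1: "T1 \<in> fam {1..n}" "card T1 = ?A" using O1 by blast
    obtain T2 where T2: "T2 \<in> fam ({1..n} - C)" "card T2 + 1 = ?B" using O2[OF mc(1,2) n1] by auto
    have "finite T2" "0 \<notin> T2" using T2 by (auto simp: fam_def intro: finite_subset)
    then have "card (insert 0 T2) = ?B" using T2 by simp
    moreover have "insert 0 T2 \<in> IS (GVn n) (GEn n C)" using IS T2 by auto
    moreover have "T1 \<in> IS (GVn n) (GEn n C)" using IS T1 by auto
    ultimately have "?A \<in> card ` IS (GVn n) (GEn n C)" "?B \<in> card ` IS (GVn n) (GEn n C)"
      using T1 by (metis image_eqI)+
    then show "max ?A ?B \<in> card ` IS (GVn n) (GEn n C)" by (simp add: max_def)
  qed
  then show ?thesis by (simp add: indep_num_def IS_def)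
qed

lemma m3: "(3 * q + r) mod 3 = r mod (3::nat)" by simp

lemma decomp3: "3 \<le> (v::nat) \<Longrightarrow> \<exists>q. v = 3 * q + 3 + v mod 3"
proof -
  assume v: "3 \<le> v"
  have "3 div 3 \<le> v div 3" using v by (rule div_le_mono)
  then obtain k where k: "v div 3 = Suc k" by (cases "v div 3") auto
  have "v div 3 * 3 + v mod 3 = v" by (rule div_mult_mod_eq)
  then have "v = 3 * k + 3 + v mod 3" using k by simp
  then show ?thesis by blast
qed

lemma r3: "(r::nat) < 3 \<Longrightarrow> r = 0 \<or> r = 1 \<or> r = 2"
  by (auto simp: numeral_3_eq_3 numeral_2_eq_2 less_Suc_eq)

lemma ar7: "(n::nat) mod 3 = 0 \<or> n mod 3 = 1 \<or> n mod 3 = 2"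
  by (rule r3) simp

lemma ar1: "3 \<le> (v::nat) \<Longrightarrow> v mod 3 = 0 \<Longrightarrow> (v - 2) mod 3 = 1 \<and> (v - 1) mod 3 = 2"
proof -
  assume "3 \<le> v" "v mod 3 = 0"
  then obtain q where "v = 3 * q + 3" using decomp3 by fastforce
  then have "v - 2 = 3 * q + 1" "v - 1 = 3 * q + 2" by simp_all
  then show ?thesis by (simp only: m3) simp
qed

lemma ar2: "3 \<le> (v::nat) \<Longrightarrow> v mod 3 = 1 \<Longrightarrow> (v - 2) mod 3 = 2 \<and> (v - 1) mod 3 = 0"
proof -
  assume "3 \<le> v" "v mod 3 = 1"
  then obtain q where "v = 3 * q + 3 + 1" using decomp3 by fastforce
  then have "v - 2 = 3 * q + 2" "v - 1 = 3 * (q + 1) + 0" by simp_all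
  then show ?thesis by (simp only: m3) simp
qed

lemma ar3: "3 \<le> (v::nat) \<Longrightarrow> v mod 3 = 2 \<Longrightarrow> (v - 1) mod 3 = 1"
proof -
  assume "3 \<le> v" "v mod 3 = 2"
  then obtain q where "v = 3 * q + 3 + 2" using decomp3 by fastforce
  then have "v - 1 = 3 * (q + 1) + 1" by simp
  then show ?thesis by (simp only: m3) simp
qed

lemma ar4: "2 \<le> (n::nat) \<Longrightarrow> n mod 3 = 0 \<Longrightarrow> (n - 1) mod 3 = 2"
proof -
  assume n: "2 \<le> n" "n mod 3 = 0"
  have "n \<noteq> 2"
  proof
    assume "n = 2" then show False using n(2) by simp
  qed
  then have "3 \<le> n" using n(1) by linarith
  then show ?thesis using ar1[OF _ n(2)] by blast
qed

lemma ar5: "2 \<le> (n::nat) \<Longrightarrow> n mod 3 = 2 \<Longrightarrow> (n - 1) mod 3 = 1"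
proof -
  assume n: "2 \<le> n" "n mod 3 = 2"
  show ?thesis
  proof (cases "n = 2")
    case True then show ?thesis by simp
  next
    case False
    then have "3 \<le> n" using n(1) by linarith
    then show ?thesis using ar3[OF _ n(2)] by blast
  qed
qed

lemma ar6: "(x::nat) mod 3 = 1 \<Longrightarrow> x = 3 * (x div 3) + 1"
proof -
  assume h: "x mod 3 = 1"
  have "x div 3 * 3 + x mod 3 = x" by (rule div_mult_mod_eq)
  then show ?thesis using h by linarith
qed

lemma special:
  assumes hC: "maximal_indep (pathV n) (pathE n) C" and n2: "2 \<le> n"
    and noiso: "\<And>v. v \<in> {1..n} - C \<Longrightarrow> v - 1 \<in> {1..n} - C \<or> Suc v \<in> {1..n} - C"
  shows "n mod 3 = 1 \<and> C = {3 * i + 1 | i. i \<le> n div 3}"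
proof -
  note mc = maxC[OF hC]
  have ncC: "x \<in> C \<Longrightarrow> Suc x \<notin> C" for x using mc(2) by (simp add: nc_def)
  have key: "1 \<le> v \<Longrightarrow> v \<le> n \<Longrightarrow> (v \<in> C \<longleftrightarrow> v mod 3 = 1)" for v
  proof (induction v rule: less_induct)
    case (less v)
    consider "v = 1" | "v = 2" | "3 \<le> v" using less.prems by linarith
    then show ?case
    proof cases
      case 1
      have "1 \<in> C"
      proof (rule ccontr)
        assume h: "1 \<notin> C"
        then have "1 \<in> {1..n} - C" using n2 by auto
        then have "Suc 1 \<in> {1..n} - C" using noiso[of 1] by auto
        moreover have "1 - 1 \<in> C \<or> Suc 1 \<in> C" using mc(3)[of 1] h n2 by auto
        ultimately show False using mc(1) by auto
      qed
      then show ?thesis using 1 by simp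
    next
      case 2
      have "1 \<in> C" using less.IH[of 1] 2 less.prems by simp
      then have "2 \<notin> C" using ncC[of 1] by (simp add: numeral_2_eq_2)
      then show ?thesis using 2 by simp
    next
      case 3
      have ih1: "v - 1 \<in> C \<longleftrightarrow> (v - 1) mod 3 = 1" using less.IH[of "v - 1"] less.prems 3 by simp
      have ih2: "v - 2 \<in> C \<longleftrightarrow> (v - 2) mod 3 = 1" using less.IH[of "v - 2"] less.prems 3 by simp
      have sv1: "Suc (v - 1) = v" and sv2: "Suc (v - 2) = v - 1" and sv3: "v - 1 - 1 = v - 2"
        using 3 by auto
      have "v mod 3 = 0 \<or> v mod 3 = 1 \<or> v mod 3 = 2" by (rule ar7)
      then show ?thesis
      proof (elim disjE)
        assume a: "v mod 3 = 0"
        have m1: "(v - 2) mod 3 = 1" using ar1[OF 3 a] by simp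
        have m2: "(v - 1) mod 3 = 2" using ar1[OF 3 a] by simp
        have c2: "v - 2 \<in> C" using ih2 m1 by blast
        have c1: "v - 1 \<notin> C" using ih1 m2 by simp
        have "v - 1 \<in> {1..n}" using 3 less.prems by auto
        then have "v - 1 \<in> {1..n} - C" using c1 by blast
        then have "v - 1 - 1 \<in> {1..n} - C \<or> Suc (v - 1) \<in> {1..n} - C" by (rule noiso)
        then have "v - 2 \<in> {1..n} - C \<or> v \<in> {1..n} - C" unfolding sv1 sv3 .
        then have "v \<notin> C" using c2 by blast
        then show ?thesis using a by simp
      next
        assume b: "v mod 3 = 1"
        have m1: "(v - 2) mod 3 = 2" using ar2[OF 3 b] by simp
        have m2: "(v - 1) mod 3 = 0" using ar2[OF 3 b] by simp
        have c2: "v - 2 \<notin> C" using ih2 m1 by simp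
        have c1: "v - 1 \<notin> C" using ih1 m2 by simp
        have "v - 1 \<in> {1..n}" using 3 less.prems by auto
        then have "v - 1 - 1 \<in> C \<or> Suc (v - 1) \<in> C" using mc(3) c1 by blast
        then have "v - 2 \<in> C \<or> v \<in> C" unfolding sv1 sv3 .
        then have "v \<in> C" using c2 by blast
        then show ?thesis using b by simp
      next
        assume c: "v mod 3 = 2"
        have m2: "(v - 1) mod 3 = 1" using ar3[OF 3 c] by simp
        then have "v - 1 \<in> C" using ih1 by blast
        then have "Suc (v - 1) \<notin> C" by (rule ncC)
        then have "v \<notin> C" unfolding sv1 .
        then show ?thesis using c by simp
      qed
    qed
  qed
  have nmod: "n mod 3 = 1"
  proof -
    have "n mod 3 = 0 \<or> n mod 3 = 1 \<or> n mod 3 = 2" by (rule ar7)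
    then show ?thesis
    proof (elim disjE)
      assume h1: "n mod 3 = 0"
      have "n \<notin> C" using key[of n] h1 n2 by simp
      moreover have "(n - 1) mod 3 = 2" using ar4[OF n2 h1] .
      then have "n - 1 \<notin> C" using key[of "n - 1"] n2 by simp
      moreover have "Suc n \<notin> C" using mc(1) by auto
      ultimately show ?thesis using mc(3)[of n] n2 by auto
    next
      assume "n mod 3 = 1" then show ?thesis .
    next
      assume h3: "n mod 3 = 2"
      have "n \<notin> C" using key[of n] h3 n2 by simp
      moreover have "(n - 1) mod 3 = 1" using ar5[OF n2 h3] .
      then have "n - 1 \<in> C" using key[of "n - 1"] n2 by simp
      ultimately have "n - 1 \<in> {1..n} - C \<or> Suc n \<in> {1..n} - C" using noiso[of n] n2 by auto
      then show ?thesis using \<open>n - 1 \<in> C\<close> by auto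
    qed
  qed
  have "C = {3 * i + 1 | i. i \<le> n div 3}"
  proof (intro equalityI subsetI)
    fix x assume x: "x \<in> C"
    then have x1: "1 \<le> x" "x \<le> n" using mc(1) by auto
    then have "x mod 3 = 1" using key x by simp
    then have "x = 3 * (x div 3) + 1" by (rule ar6)
    moreover have "x div 3 \<le> n div 3" using x1 by (simp add: div_le_mono)
    ultimately show "x \<in> {3 * i + 1 | i. i \<le> n div 3}" by blast
  next
    fix x assume "x \<in> {3 * i + 1 | i. i \<le> n div 3}"
    then obtain i where i: "x = 3 * i + 1" "i \<le> n div 3" by blast
    have "3 * (n div 3) + 1 = n" using ar6[OF nmod] by linarith
    then have "x \<le> n" using i by auto
    then show "x \<in> C" using key[of x] i by simp
  qed
  then show ?thesis using nmod by simp
qed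

theorem theorem7p3:
  fixes n :: nat and C :: "nat set"
  assumes hn: "n \<ge> 2"
    and hC: "maximal_indep (pathV n) (pathE n) C"
  defines "GV \<equiv> suspV (pathV n) 0"
    and "GE \<equiv> suspE (pathE n) C 0"
    and "c \<equiv> card C"
    and "\<alpha> \<equiv> (n + 1) div 2"
    and "b \<equiv> (-1) ^ ((n + 1) div 2) * indep_poly_eval (pathV n) (pathE n) (-1)"
    and "\<delta> \<equiv> (if 1 \<in> C then 0 else 1) + (if n \<in> C then 0 else (1::nat))"
  shows
    "(n mod 3 \<in> {0, 2} \<longrightarrow>
        a_inv GV GE = 0 \<and>
        (c + \<delta> = \<alpha> + 1 \<longrightarrow> coeff (h_poly GV GE) (indep_num GV GE) = - b) \<and>
        (c + \<delta> \<le> \<alpha> \<longrightarrow> coeff (h_poly GV GE) (indep_num GV GE) = b))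
   \<and> (\<forall>k. n = 3 * k + 1 \<and> C = {3 * i + 1 | i. i \<le> k} \<longrightarrow>
        a_inv GV GE = 0 \<and>
        coeff (h_poly GV GE) (indep_num GV GE) = (-1) ^ (\<alpha> + k + 1))
   \<and> (n mod 3 = 1 \<and> C \<noteq> {3 * i + 1 | i. i \<le> n div 3} \<longrightarrow> a_inv GV GE < 0)"
proof -
  note mc = maxC[OF hC]
  have GVe: "GV = GVn n" by (simp add: GV_def GVn_def)
  have GEe: "GE = GEn n C" by (simp add: GE_def GEn_def)
  have fC: "finite C" using mc(1) by (rule finite_subset) simp
  have n1: "1 \<le> n" using hn by simp
  have aG: "indep_num GV GE = max \<alpha> (c + \<delta>)"
  proof -
    have "card (C - {1}) + (if n \<in> C then 0 else 1) + 1 = c + \<delta>"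
    proof (cases "1 \<in> C")
      case True
      then have "c \<ge> 1" using fC by (simp add: c_def card_gt_0_iff Suc_le_eq) (use True in blast)
      then show ?thesis using True fC by (simp add: c_def \<delta>_def card_Diff_singleton)
    next
      case False
      then show ?thesis by (simp add: c_def \<delta>_def)
    qed
    then show ?thesis using alphaG[OF hC n1] by (simp add: GVe GEe \<alpha>_def)
  qed
  have apos: "indep_num GV GE > 0"
  proof -
    have "\<alpha> \<ge> 1" using hn by (simp add: \<alpha>_def)
    then show ?thesis using aG by simp
  qed
  note gm = general_main[OF wfE_G[OF mc(1)] finite_GV apos[unfolded GVe GEe]]
  have PG': "indep_poly_eval GV GE (-1) = pp n - Q ({1..n} - C)"
    using PG[OF mc(1)] by (simp add: GVe GEe)
  have bpp: "b = (-1) ^ \<alpha> * pp n"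
    by (simp add: b_def \<alpha>_def indep_poly_eval_def pp_def Q_def IS_path[unfolded IS_def])
  have finU: "finite ({1..n} - C)" by simp
  have Qcases: "Q ({1..n} - C) = 0 \<or> (n mod 3 = 1 \<and> C = {3 * i + 1 | i. i \<le> n div 3})"
  proof (cases "\<exists>v\<in>{1..n} - C. v - 1 \<notin> {1..n} - C \<and> Suc v \<notin> {1..n} - C")
    case True
    then obtain v where "v \<in> {1..n} - C" "v - 1 \<notin> {1..n} - C" "Suc v \<notin> {1..n} - C" by blast
    then have "Q ({1..n} - C) = 0" by (intro Q_isolated[OF finU])
    then show ?thesis by simp
  next
    case False
    then have "n mod 3 = 1 \<and> C = {3 * i + 1 | i. i \<le> n div 3}"
      by (intro special[OF hC hn]) blast
    then show ?thesis by simp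
  qed
  have partA: "n mod 3 \<in> {0, 2} \<longrightarrow>
        a_inv GV GE = 0 \<and>
        (c + \<delta> = \<alpha> + 1 \<longrightarrow> coeff (h_poly GV GE) (indep_num GV GE) = - b) \<and>
        (c + \<delta> \<le> \<alpha> \<longrightarrow> coeff (h_poly GV GE) (indep_num GV GE) = b)"
  proof
    assume nm: "n mod 3 \<in> {0, 2}"
    then have Q0: "Q ({1..n} - C) = 0" using Qcases by auto
    have ppn: "pp n \<noteq> 0" using nm pp_zero_iff[of n] by auto
    have P: "indep_poly_eval GV GE (-1) = pp n" using PG' Q0 by simp
    have a0: "a_inv GV GE = 0" using gm(2) P ppn by (simp add: GVe GEe)
    have co: "coeff (h_poly GV GE) (indep_num GV GE) = (-1) ^ indep_num GV GE * pp n"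
      using gm(1) P by (simp add: GVe GEe)
    show "a_inv GV GE = 0 \<and>
        (c + \<delta> = \<alpha> + 1 \<longrightarrow> coeff (h_poly GV GE) (indep_num GV GE) = - b) \<and>
        (c + \<delta> \<le> \<alpha> \<longrightarrow> coeff (h_poly GV GE) (indep_num GV GE) = b)"
      using a0 co aG bpp by (auto simp: max_def)
  qed
  have partB: "\<forall>k. n = 3 * k + 1 \<and> C = {3 * i + 1 | i. i \<le> k} \<longrightarrow>
        a_inv GV GE = 0 \<and>
        coeff (h_poly GV GE) (indep_num GV GE) = (-1) ^ (\<alpha> + k + 1)"
  proof (intro allI impI)
    fix k assume k: "n = 3 * k + 1 \<and> C = {3 * i + 1 | i. i \<le> k}"
    have U: "{1..n} - C = Uk k"
    proof (intro equalityI subsetI)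
      fix x assume x: "x \<in> {1..n} - C"
      have "x mod 3 \<noteq> 1"
      proof
        assume "x mod 3 = 1"
        then have "x = 3 * (x div 3) + 1" by (rule ar6)
        moreover have "x div 3 \<le> k" using x k by auto
        ultimately have "x \<in> C" using k by blast
        then show False using x by simp
      qed
      moreover have "x \<noteq> 3 * k + 1" using k x by auto
      ultimately show "x \<in> Uk k" using x k by (auto simp: Uk_def)
    next
      fix x assume x: "x \<in> Uk k"
      then have x1: "1 \<le> x" "x \<le> 3 * k" "x mod 3 \<noteq> 1" by (auto simp: Uk_def)
      have "x \<notin> C"
      proof
        assume "x \<in> C"
        then obtain i where "x = 3 * i + 1" using k by blast
        then show False using x1 by simp
      qed
      then show "x \<in> {1..n} - C" using x1 k by auto
    qed
    have Qk: "Q ({1..n} - C) = (-1) ^ k" using U Q_Uk by simp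
    have ppn: "pp n = 0" using k pp_zero_iff[of n] by simp
    have P: "indep_poly_eval GV GE (-1) = - ((-1) ^ k)" using PG' Qk ppn by simp
    have a0: "a_inv GV GE = 0" using gm(2) P by (simp add: GVe GEe)
    have cC: "c = k + 1"
    proof -
      have "C = (\<lambda>i. 3 * i + 1) ` {..k}" using k by auto
      then have "card C = card {..k}" by (simp add: card_image inj_on_def)
      then show ?thesis by (simp add: c_def)
    qed
    have d0: "\<delta> = 0"
    proof -
      have "1 \<in> C" using k by auto
      moreover have "n \<in> C" using k by auto
      ultimately show ?thesis by (simp add: \<delta>_def)
    qed
    have "\<alpha> \<ge> k + 1" using k by (simp add: \<alpha>_def)
    then have aa: "indep_num GV GE = \<alpha>" using aG cC d0 by simp
    have "coeff (h_poly GV GE) (indep_num GV GE) = (-1) ^ \<alpha> * (- ((-1) ^ k))"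
      using gm(1) P aa by (simp add: GVe GEe)
    also have "\<dots> = (-1) ^ (\<alpha> + k + 1)" by (simp add: power_add)
    finally show "a_inv GV GE = 0 \<and> coeff (h_poly GV GE) (indep_num GV GE) = (-1) ^ (\<alpha> + k + 1)"
      using a0 by simp
  qed
  have partC: "n mod 3 = 1 \<and> C \<noteq> {3 * i + 1 | i. i \<le> n div 3} \<longrightarrow> a_inv GV GE < 0"
  proof
    assume h: "n mod 3 = 1 \<and> C \<noteq> {3 * i + 1 | i. i \<le> n div 3}"
    then have Q0: "Q ({1..n} - C) = 0" using Qcases by auto
    have ppn: "pp n = 0" using h pp_zero_iff[of n] by simp
    have "indep_poly_eval GV GE (-1) = 0" using PG' Q0 ppn by simp
    then show "a_inv GV GE < 0" using gm(3) by (simp add: GVe GEe)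
  qed
  show ?thesis using partA partB partC by blast
qed

end
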